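(* In the setting described in the context, for every $i$ with $1\le i<m-1$, $\Phi(p_i,p_{i+1})\le 2\cdot L_1(\overline{p}_i,\overline{q}_i)$.
   Context: $P$ is a finite set of points in the plane, $s,t\in P$ distinct, and coordinates are chosen so that $t=(0,0)$ and $s$ lies in $C_2^t$ below the line $\ell_t^-=\{x+y=0\}$. Cones: $C_0^v=\{x\ge v_x,y\le v_y\}$, $C_1^v=\{x\ge v_x,y\ge v_y\}$, $C_2^v=\{x\le v_x,y\ge v_y\}$, $C_3^v=\{x\le v_x,y\le v_y\}$ with bisector directions $(1,-1),(1,1),(-1,1),(-1,-1)$. The $\Theta_4$-graph of $P$ has, for each $v\in P$ and cone $C_i^v$ containing a point of $P\setminus\{v\}$, a directed edge from $v$ to a point $w$ of $(P\setminus\{v\})\cap C_i^v$ minimizing the projection of $w-v$ onto the bisector direction (the neighbour of $v$ in $C_i^v$). For a point $p$, $\ell_p^+$ is the line through $p$ of slope $+1$, and $\overline{p}$ denotes the intersection point of $\ell_t^-$ and $\ell_p^+$. $L_1$ denotes the $L_1$ distance. Algorithm: for a vertex $v$, let $T(v,\ell_t^-)=C_1^v\cap\{x+y\le0\}$ if $v_x+v_y<0$, $T(v,\ell_t^-)=C_3^v\cap\{x+y\ge0\}$ if $v_x+v_y>0$, and $\{v\}$ if $v_x+v_y=0$; $v$ is clean if $T(v,\ell_t^-)$ contains no point of $P$ other than $v$. Starting at $v=s$, while $v\ne t$: if $v$ is not clean, take a sweeping step (go to the neighbour of $v$ in $C_1^v$, resp. $C_3^v$); otherwise take a greedy step (go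 to the neighbour of $v$ in the cone $C_i^v$ containing $t$). Let $(p_1,q_1),\dots,(p_{m-1},q_{m-1})$ be, in order, the edges traversed by greedy steps, and set $p_m=t$. Potential: for $1\le i<m-1$, $\Phi(p_i,p_{i+1})=L_1(p_i,q_i)+L_1(q_i,\overline{p}_{i+1})-L_1(p_i,\overline{p}_i)$. *)

theory Defs
  imports Complex_Main
begin

type_synonym point = "real \<times> real"

definition cone :: "nat \<Rightarrow> point \<Rightarrow> point \<Rightarrow> bool" where
  "cone i v w \<longleftrightarrow>
     (if i = 0 then fst w \<ge> fst v \<and> snd w \<le> snd v
      else if i = 1 then fst w \<ge> fst v \<and> snd w \<ge> snd v
      else if i = 2 then fst w \<le> fst v \<and> snd w \<ge> snd v
      else fst w \<le> fst v \<and> snd w \<le> snd v)"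

definition bisector :: "nat \<Rightarrow> point" where
  "bisector i = (if i = 0 then (1, -1) else if i = 1 then (1, 1)
                 else if i = 2 then (-1, 1) else (-1, -1))"

text \<open>Projection of w - v onto the bisector direction of cone i (up to the
  positive factor 1/sqrt 2, irrelevant for minimisation).\<close>
definition proj :: "nat \<Rightarrow> point \<Rightarrow> point \<Rightarrow> real" where
  "proj i v w = (fst w - fst v) * fst (bisector i) + (snd w - snd v) * snd (bisector i)"

definition is_nb :: "point set \<Rightarrow> point \<Rightarrow> nat \<Rightarrow> point \<Rightarrow> bool" where
  "is_nb P v i w \<longleftrightarrow> w \<in> P \<and> w \<noteq> v \<and> cone i v w \<and>
     (\<forall>u\<in>P - {v}. cone i v u \<longrightarrow> proj i v w \<le> proj i v u)"

text \<open>nb is a Theta_4 graph of P: for each vertex and each nonempty cone, it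
  selects a neighbour (ties broken arbitrarily).\<close>
definition theta4 :: "point set \<Rightarrow> (point \<Rightarrow> nat \<Rightarrow> point) \<Rightarrow> bool" where
  "theta4 P nb \<longleftrightarrow> (\<forall>v\<in>P. \<forall>i<4. (\<exists>u\<in>P - {v}. cone i v u) \<longrightarrow> is_nb P v i (nb v i))"

definition Ttri :: "point \<Rightarrow> point set" where
  "Ttri v = (if fst v + snd v < 0 then {w. cone 1 v w \<and> fst w + snd w \<le> 0}
             else if fst v + snd v > 0 then {w. cone 3 v w \<and> fst w + snd w \<ge> 0}
             else {v})"

definition clean :: "point set \<Rightarrow> point \<Rightarrow> bool" where
  "clean P v \<longleftrightarrow> Ttri v \<inter> P \<subseteq> {v}"

text \<open>path 0, ..., path k is a run of the routing algorithm from s to t = (0,0)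
  in the Theta_4 graph nb.\<close>
definition is_run :: "point set \<Rightarrow> (point \<Rightarrow> nat \<Rightarrow> point) \<Rightarrow> point \<Rightarrow> (nat \<Rightarrow> point) \<Rightarrow> nat \<Rightarrow> bool" where
  "is_run P nb s path k \<longleftrightarrow>
     path 0 = s \<and> path k = (0, 0) \<and> (\<forall>j<k. path j \<noteq> (0, 0)) \<and>
     (\<forall>j<k.
        (\<not> clean P (path j) \<longrightarrow>
           path (Suc j) = nb (path j) (if fst (path j) + snd (path j) < 0 then 1 else 3)) \<and>
        (clean P (path j) \<longrightarrow>
           (\<exists>i<4. cone i (path j) (0, 0) \<and> path (Suc j) = nb (path j) i)))"

text \<open>The greedy edges (p_1,q_1), ..., (p_{m-1},q_{m-1}) in order (0-indexed list).\<close>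
definition greedy_edges :: "point set \<Rightarrow> (nat \<Rightarrow> point) \<Rightarrow> nat \<Rightarrow> (point \<times> point) list" where
  "greedy_edges P path k = [(path j, path (Suc j)). j \<leftarrow> [0..<k], clean P (path j)]"

definition L1 :: "point \<Rightarrow> point \<Rightarrow> real" where
  "L1 a b = \<bar>fst a - fst b\<bar> + \<bar>snd a - snd b\<bar>"

text \<open>pbar p = intersection of l_t^- (x+y=0) with the slope +1 line through p.\<close>
definition pbar :: "point \<Rightarrow> point" where
  "pbar p = ((fst p - snd p) / 2, (snd p - fst p) / 2)"

definition Phi :: "point \<Rightarrow> point \<Rightarrow> point \<Rightarrow> real" where
  "Phi p q p' = L1 p q + L1 q (pbar p') - L1 p (pbar p)"

end

theory Submission
  imports Defs
begin

lemma L1_max: "L1 a b = max \<bar>(fst a + snd a) - (fst b + snd b)\<bar> \<bar>(fst a - snd a) - (fst b - snd b)\<bar>"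
  unfolding L1_def max_def by (auto simp: abs_if split: if_splits)

lemma pbar_u: "fst (pbar p) + snd (pbar p) = 0" by (simp add: pbar_def field_simps)
lemma pbar_w: "fst (pbar p) - snd (pbar p) = fst p - snd p" by (simp add: pbar_def field_simps)

lemma final_arith:
  assumes G: "\<bar>(fst q + snd q) - (fst p + snd p)\<bar> \<le> \<bar>(fst q - snd q) - (fst p - snd p)\<bar>"
    and S: "\<bar>(fst p' - snd p') - (fst q - snd q)\<bar> \<le> \<bar>fst q + snd q\<bar> - \<bar>fst p' + snd p'\<bar>"
  shows "Phi p q p' \<le> 2 * L1 (pbar p) (pbar q)"
proof -
  have "L1 p q = \<bar>(fst q - snd q) - (fst p - snd p)\<bar>"
    using G by (simp add: L1_max max_def abs_minus_commute)
  moreover have "L1 q (pbar p') = max \<bar>fst q + snd q\<bar> \<bar>(fst q - snd q) - (fst p' - snd p')\<bar>"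
    by (simp add: L1_max pbar_u pbar_w)
  moreover have "L1 p (pbar p) = \<bar>fst p + snd p\<bar>"
    by (simp add: L1_max pbar_u pbar_w)
  moreover have "L1 (pbar p) (pbar q) = \<bar>(fst q - snd q) - (fst p - snd p)\<bar>"
    by (simp add: L1_max pbar_u pbar_w abs_minus_commute)
  ultimately show ?thesis using G S unfolding Phi_def max_def
    by (auto simp: abs_if split: if_splits)
qed

lemma sweep_step:
  assumes th: "theta4 P nb" and vP: "v \<in> P" and nc: "\<not> clean P v"
    and v': "v' = nb v (if fst v + snd v < 0 then 1 else 3)"
  shows "\<bar>(fst v' - snd v') - (fst v - snd v)\<bar> \<le> \<bar>fst v + snd v\<bar> - \<bar>fst v' + snd v'\<bar>"
proof -
  from nc obtain r where r: "r \<in> Ttri v" "r \<in> P" "r \<noteq> v" unfolding clean_def by blast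
  from th vP have T: "\<forall>i<4. (\<exists>u\<in>P-{v}. cone i v u) \<longrightarrow> is_nb P v i (nb v i)"
    unfolding theta4_def by blast
  consider "fst v + snd v < 0" | "fst v + snd v > 0" | "fst v + snd v = 0" by linarith
  then show ?thesis
  proof cases
    case 1
    then have rc: "cone 1 v r" "fst r + snd r \<le> 0" using r(1) by (auto simp: Ttri_def)
    have "is_nb P v 1 (nb v 1)" using T[rule_format, of 1] r rc by auto
    then have "is_nb P v 1 v'" using 1 v' by simp
    then have "cone 1 v v'" "proj 1 v v' \<le> proj 1 v r" using r rc unfolding is_nb_def by auto
    then show ?thesis using 1 rc by (auto simp: cone_def proj_def bisector_def abs_if)
  next
    case 2
    then have rc: "cone 3 v r" "fst r + snd r \<ge> 0" using r(1) by (auto simp: Ttri_def)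
    have "is_nb P v 3 (nb v 3)" using T[rule_format, of 3] r rc by auto
    then have "is_nb P v 3 v'" using 2 v' by simp
    then have "cone 3 v v'" "proj 3 v v' \<le> proj 3 v r" using r rc unfolding is_nb_def by auto
    then show ?thesis using 2 rc by (auto simp: cone_def proj_def bisector_def abs_if)
  next
    case 3
    then show ?thesis using r by (auto simp: Ttri_def)
  qed
qed

lemma greedy_step:
  assumes th: "theta4 P nb" and vP: "v \<in> P" and cl: "clean P v" and v0: "v \<noteq> (0,0)"
    and tP: "(0,0) \<in> P" and i: "i < 4" and ci: "cone i v (0,0)" and v': "v' = nb v i"
  shows "\<bar>(fst v' + snd v') - (fst v + snd v)\<bar> \<le> \<bar>(fst v' - snd v') - (fst v - snd v)\<bar>"
proof -
  from th vP have T: "\<forall>i<4. (\<exists>u\<in>P-{v}. cone i v u) \<longrightarrow> is_nb P v i (nb v i)"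
    unfolding theta4_def by blast
  have nb: "is_nb P v i v'" using T i ci tP v0 v' by auto
  have "i \<noteq> 1"
  proof
    assume "i = 1"
    then have "fst v \<le> 0" "snd v \<le> 0" using ci by (auto simp: cone_def)
    moreover have "fst v + snd v < 0 \<Longrightarrow> False"
    proof -
      assume u: "fst v + snd v < 0"
      have "(0,0) \<in> Ttri v \<inter> P" using u tP \<open>fst v \<le> 0\<close> \<open>snd v \<le> 0\<close> by (auto simp: Ttri_def cone_def)
      then show False using cl v0 unfolding clean_def by blast
    qed
    ultimately show False using v0 by (metis add_nonpos_nonpos antisym linorder_not_le prod.collapse add_nonpos_eq_0_iff)
  qed
  moreover have "i \<noteq> 3"
  proof
    assume "i = 3"
    then have "fst v \<ge> 0" "snd v \<ge> 0" using ci by (auto simp: cone_def)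
    moreover have "fst v + snd v > 0 \<Longrightarrow> False"
    proof -
      assume u: "fst v + snd v > 0"
      have "(0,0) \<in> Ttri v \<inter> P" using u tP \<open>fst v \<ge> 0\<close> \<open>snd v \<ge> 0\<close> by (auto simp: Ttri_def cone_def)
      then show False using cl v0 unfolding clean_def by blast
    qed
    ultimately show False using v0 by (metis add_nonneg_eq_0_iff antisym linorder_not_le prod.collapse add_nonneg_nonneg)
  qed
  ultimately have "i = 0 \<or> i = 2" using i by auto
  moreover have "cone i v v'" using nb unfolding is_nb_def by auto
  ultimately show ?thesis by (auto simp: cone_def abs_if)
qed

lemma run_inP:
  assumes th: "theta4 P nb" and run: "is_run P nb s path k" and sP: "s \<in> P" and tP: "(0,0) \<in> P"
  shows "j \<le> k \<Longrightarrow> path j \<in> P"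
proof (induction j)
  case 0
  then show ?case using run sP by (simp add: is_run_def)
next
  case (Suc j)
  then have jk: "j < k" and pj: "path j \<in> P" by auto
  from th pj have T: "\<forall>i<4. (\<exists>u\<in>P-{path j}. cone i (path j) u) \<longrightarrow> is_nb P (path j) i (nb (path j) i)"
    unfolding theta4_def by blast
  have ne: "path j \<noteq> (0,0)" using run jk by (simp add: is_run_def)
  show ?case
  proof (cases "clean P (path j)")
    case True
    then obtain i where i: "i < 4" "cone i (path j) (0,0)" "path (Suc j) = nb (path j) i"
      using run jk unfolding is_run_def by blast
    then have "is_nb P (path j) i (path (Suc j))" using T tP ne by auto
    then show ?thesis by (simp add: is_nb_def)
  next
    case False
    from False obtain r where r: "r \<in> Ttri (path j)" "r \<in> P" "r \<noteq> path j" unfolding clean_def by blast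
    have st: "path (Suc j) = nb (path j) (if fst (path j) + snd (path j) < 0 then 1 else 3)"
      using run jk False unfolding is_run_def by blast
    define ii where "ii = (if fst (path j) + snd (path j) < 0 then 1 else (3::nat))"
    have "cone ii (path j) r"
      using r by (auto simp: Ttri_def ii_def split: if_splits)
    moreover have "ii < 4" by (simp add: ii_def)
    ultimately have "is_nb P (path j) ii (nb (path j) ii)"
      using T r by blast
    then have "is_nb P (path j) ii (path (Suc j))" using st ii_def by simp
    then show ?thesis by (simp add: is_nb_def)
  qed
qed

lemma sweep_chain:
  assumes th: "theta4 P nb" and run: "is_run P nb s path k" and sP: "s \<in> P" and tP: "(0,0) \<in> P"
    and ab: "a \<le> b"
  shows "b \<le> k \<Longrightarrow> (\<forall>c. a \<le> c \<and> c < b \<longrightarrow> \<not> clean P (path c)) \<Longrightarrow>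
    \<bar>(fst (path b) - snd (path b)) - (fst (path a) - snd (path a))\<bar>
      \<le> \<bar>fst (path a) + snd (path a)\<bar> - \<bar>fst (path b) + snd (path b)\<bar>"
  using ab
proof (induction b rule: dec_induct)
  case base
  then show ?case by simp
next
  case (step n)
  then have nk: "n < k" and nc: "\<not> clean P (path n)" by auto
  have IH: "\<bar>(fst (path n) - snd (path n)) - (fst (path a) - snd (path a))\<bar>
      \<le> \<bar>fst (path a) + snd (path a)\<bar> - \<bar>fst (path n) + snd (path n)\<bar>" using step by auto
  have st: "path (Suc n) = nb (path n) (if fst (path n) + snd (path n) < 0 then 1 else 3)"
    using run nk nc unfolding is_run_def by blast
  have "path n \<in> P" using run_inP[OF th run sP tP] nk by simp
  from sweep_step[OF th this nc st]
  have "\<bar>(fst (path (Suc n)) - snd (path (Suc n))) - (fst (path n) - snd (path n))\<bar>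
     \<le> \<bar>fst (path n) + snd (path n)\<bar> - \<bar>fst (path (Suc n)) + snd (path (Suc n))\<bar>" .
  with IH show ?case by linarith
qed

lemma ge_map: "greedy_edges P path k = map (\<lambda>j. (path j, path (Suc j))) (filter (\<lambda>j. clean P (path j)) [0..<k])"
  by (induction k) (auto simp: greedy_edges_def)

theorem lemma4:
  fixes P :: "point set" and s :: point and nb :: "point \<Rightarrow> nat \<Rightarrow> point"
    and path :: "nat \<Rightarrow> point" and k :: nat and i :: nat
  assumes "finite P" and "s \<in> P" and "(0, 0) \<in> P" and "s \<noteq> (0, 0)"
    and "cone 2 (0, 0) s" and "fst s + snd s < 0"
    and "theta4 P nb"
    and "is_run P nb s path k"
    and "Suc i < length (greedy_edges P path k)"
  shows "Phi (fst (greedy_edges P path k ! i)) (snd (greedy_edges P path k ! i))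
             (fst (greedy_edges P path k ! Suc i))
         \<le> 2 * L1 (pbar (fst (greedy_edges P path k ! i))) (pbar (snd (greedy_edges P path k ! i)))"
proof -
  note th = assms(7) and run = assms(8) and sP = assms(2) and tP = assms(3)
  define js where "js = filter (\<lambda>j. clean P (path j)) [0..<k]"
  have ge: "greedy_edges P path k = map (\<lambda>j. (path j, path (Suc j))) js"
    unfolding js_def by (rule ge_map)
  have len: "Suc i < length js" using assms(9) ge by simp
  define a where "a = js ! i"
  define b where "b = js ! Suc i"
  have srt: "sorted_wrt (<) js" unfolding js_def by (simp add: sorted_wrt_filter)
  have ab: "a < b" unfolding a_def b_def using srt len by (simp add: sorted_wrt_nth_less)
  have aset: "a \<in> set js" unfolding a_def using len by simp
  have bset: "b \<in> set js" unfolding b_def using len by simp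
  have ak: "a < k" and acl: "clean P (path a)" using aset by (auto simp: js_def)
  have bk: "b < k" using bset by (auto simp: js_def)
  have betw: "\<forall>c. Suc a \<le> c \<and> c < b \<longrightarrow> \<not> clean P (path c)"
  proof (intro allI impI notI)
    fix c assume c: "Suc a \<le> c \<and> c < b" and cl: "clean P (path c)"
    then have "c \<in> set js" using bk by (auto simp: js_def)
    then obtain n where n: "n < length js" "js ! n = c" by (auto simp: in_set_conv_nth)
    show False
    proof (cases "n \<le> i")
      case True
      then have "js ! n \<le> js ! i" using srt len
        by (metis le_less order.refl sorted_wrt_nth_less Suc_lessD less_imp_le_nat order.strict_trans1)
      then show False using c n a_def by simp
    next
      case False
      then have "Suc i \<le> n" by simp
      then have "js ! Suc i \<le> js ! n" using srt n
        by (metis le_less order.refl sorted_wrt_nth_less)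
      then show False using c n b_def by simp
    qed
  qed
  have e1: "greedy_edges P path k ! i = (path a, path (Suc a))" using ge len a_def by simp
  have e2: "greedy_edges P path k ! Suc i = (path b, path (Suc b))" using ge len b_def by simp
  have pa0: "path a \<noteq> (0,0)" using run ak by (simp add: is_run_def)
  obtain i0 where i0: "i0 < 4" "cone i0 (path a) (0,0)" "path (Suc a) = nb (path a) i0"
    using run ak acl unfolding is_run_def by blast
  have paP: "path a \<in> P" using run_inP[OF th run sP tP] ak by simp
  have G: "\<bar>(fst (path (Suc a)) + snd (path (Suc a))) - (fst (path a) + snd (path a))\<bar>
     \<le> \<bar>(fst (path (Suc a)) - snd (path (Suc a))) - (fst (path a) - snd (path a))\<bar>"
    by (rule greedy_step[OF th paP acl pa0 tP i0])
  have S: "\<bar>(fst (path b) - snd (path b)) - (fst (path (Suc a)) - snd (path (Suc a)))\<bar>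
      \<le> \<bar>fst (path (Suc a)) + snd (path (Suc a))\<bar> - \<bar>fst (path b) + snd (path b)\<bar>"
    using sweep_chain[OF th run sP tP, of "Suc a" b] ab bk betw by simp
  show ?thesis unfolding e1 e2 using final_arith[OF G S] by simp
qed

end
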